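(* Let $\varphi:(0,\infty)\to\mathbb{R}$ be $\varphi(s)=\dfrac{s}{\sinh^2(\pi s)}$, and let $V:\mathbb{R}\setminus\{0\}\to\mathbb{R}$ be the even function given for $s>0$ by $$V(s)=\frac{1}{\pi}\,s\coth(\pi s)-\frac{1}{\pi^2}\log\bigl(2\sinh(\pi s)\bigr),$$ and by $V(-s)=V(s)$. For $t>0$ define $\varphi_{\mathrm{eff}}(t):=\sum_{k=1}^\infty k\,\varphi(kt)$. Then $$\lim_{t\to 0^+} t^2\,\varphi_{\mathrm{eff}}(t)=\frac12\int_{-\infty}^{\infty}V(s)\,ds,$$ i.e. $\varphi_{\mathrm{eff}}(t)\approx \dfrac{1}{2t^2}\displaystyle\int_{-\infty}^{\infty}V$ as $t\to0$.
   Context: On $(0,\infty)$, $V$ is the primitive of $-\varphi$ that decays to zero at infinity ($V'=-\varphi$). The function $\varphi$ is the interaction stress between two infinite walls of edge dislocations (with in-wall spacing normalized to $1$), $V$ is the corresponding interaction energy, and $\varphi_{\mathrm{eff}}$ is the effective stress summing the contributions of all $k$-th neighbours in an equispaced array of walls. *)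

theory Defs
  imports "HOL-Analysis.Analysis"
begin

definition phi :: "real \<Rightarrow> real" where
  "phi s = s / (sinh (pi * s))\<^sup>2"

text \<open>Interaction energy: even function on R minus 0; the value at 0 is irrelevant
  (set to 0, a null set for integration).\<close>
definition V :: "real \<Rightarrow> real" where
  "V s = (if s = 0 then 0 else
     (1 / pi) * \<bar>s\<bar> * (cosh (pi * \<bar>s\<bar>) / sinh (pi * \<bar>s\<bar>))
     - (1 / pi\<^sup>2) * ln (2 * sinh (pi * \<bar>s\<bar>)))"

definition phi_eff :: "real \<Rightarrow> real" where
  "phi_eff t = (\<Sum>k. real (Suc k) * phi (real (Suc k) * t))"

end

theory Submission
  imports Defs "HOL-Real_Asymp.Real_Asymp"
begin

definition cc :: "real \<Rightarrow> real" where
  "cc s = (if s = 0 then 1 / pi else s / sinh (pi * s))"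
definition gg :: "real \<Rightarrow> real" where
  "gg s = (cc s)\<^sup>2"

lemma sinh_le_mult_cosh:
  fixes y :: real assumes "0 \<le> y" shows "sinh y \<le> y * cosh y"
proof -
  have "(\<lambda>u. u * cosh u - sinh u) 0 \<le> (\<lambda>u. u * cosh u - sinh u) y"
  proof (rule DERIV_nonneg_imp_increasing_open[OF assms])
    fix x :: real assume "0 < x" "x < y"
    have "((\<lambda>u. u * cosh u - sinh u) has_real_derivative x * sinh x) (at x)"
      by (auto intro!: derivative_eq_intros)
    moreover have "x * sinh x \<ge> 0" using \<open>0 < x\<close> by (simp add: sinh_real_nonneg_iff)
    ultimately show "\<exists>y. ((\<lambda>u. u * cosh u - sinh u) has_real_derivative y) (at x) \<and> 0 \<le> y" by blast
  next
    show "continuous_on {0..y} (\<lambda>u. u * cosh u - sinh u)" by (intro continuous_intros)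
  qed
  then show ?thesis by simp
qed

lemma cc_pos_eq: "s \<noteq> 0 \<Longrightarrow> cc s = s / sinh (pi * s)" by (simp add: cc_def)

lemma cc_pos: "0 \<le> s \<Longrightarrow> 0 < cc s"
  by (cases "s = 0") (auto simp: cc_def sinh_real_pos_iff)

lemma cc_lim0: "((\<lambda>s. s / sinh (pi * s)) \<longlongrightarrow> 1 / pi) (at (0::real))"
proof -
  have "((\<lambda>s. s / sinh (pi * s)) \<longlongrightarrow> inverse pi) (at (0::real))" by real_asymp
  then show ?thesis by (simp add: field_simps)
qed

lemma isCont_cc: "isCont cc x"
proof (cases "x = 0")
  case True
  have "(cc \<longlongrightarrow> 1 / pi) (at 0)"
  proof (rule Lim_transform_eventually[OF cc_lim0])
    show "\<forall>\<^sub>F s in at 0. s / sinh (pi * s) = cc s"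
      by (auto simp: eventually_at_filter cc_def)
  qed
  then show ?thesis using True by (simp add: isCont_def cc_def)
next
  case False
  have "\<forall>\<^sub>F y in nhds x. y \<noteq> 0" using False by (rule t1_space_nhds)
  then have "\<forall>\<^sub>F y in nhds x. cc y = y / sinh (pi * y)"
    by eventually_elim (simp add: cc_def)
  then have "isCont cc x = isCont (\<lambda>y. y / sinh (pi * y)) x" by (rule isCont_cong)
  moreover have "isCont (\<lambda>y. y / sinh (pi * y)) x"
    using False by (intro continuous_intros) (auto simp: sinh_real_zero_iff)
  ultimately show ?thesis by simp
qed

lemma cont_cc: "continuous_on A cc"
  by (simp add: continuous_at_imp_continuous_on isCont_cc)

lemma cont_gg: "continuous_on A gg"
  unfolding gg_def by (intro continuous_intros cont_cc)

lemma cc_deriv: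
  assumes "0 < x"
  shows "\<exists>y. (cc has_real_derivative y) (at x) \<and> y \<le> 0"
proof -
  have sh: "sinh (pi * x) > 0" using assms by (simp add: sinh_real_pos_iff)
  have d: "((\<lambda>y. y / sinh (pi * y)) has_real_derivative
           (sinh (pi * x) - x * (pi * cosh (pi * x))) / (sinh (pi * x))\<^sup>2) (at x)"
    using sh by (auto intro!: derivative_eq_intros simp: power2_eq_square)
  have ev: "\<forall>\<^sub>F y in nhds x. y / sinh (pi * y) = cc y"
    using t1_space_nhds[of x 0] assms by (auto elim!: eventually_mono simp: cc_def)
  have d2: "(cc has_real_derivative (sinh (pi * x) - x * (pi * cosh (pi * x))) / (sinh (pi * x))\<^sup>2) (at x)"
    using has_field_derivative_transform_within_open[OF d, of "{0<..}" cc] assms by (auto simp: cc_def)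
  have "sinh (pi * x) \<le> (pi * x) * cosh (pi * x)"
    using assms by (intro sinh_le_mult_cosh) simp
  then have "(sinh (pi * x) - x * (pi * cosh (pi * x))) / (sinh (pi * x))\<^sup>2 \<le> 0"
    by (intro divide_nonpos_nonneg) (auto simp: algebra_simps)
  with d2 show ?thesis by blast
qed

lemma cc_mono: assumes "0 \<le> x" "x \<le> y" shows "cc y \<le> cc x"
proof -
  have "cc y \<le> cc x"
    by (rule DERIV_nonpos_imp_decreasing_open[OF assms(2)])
       (use assms cc_deriv in \<open>auto intro: cont_cc\<close>)
  then show ?thesis .
qed

lemma gg_mono: "0 \<le> x \<Longrightarrow> x \<le> y \<Longrightarrow> gg y \<le> gg x"
  unfolding gg_def by (intro power_mono cc_mono) (auto intro: less_imp_le cc_pos order.trans)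

lemma gg_nonneg: "0 \<le> gg x" by (simp add: gg_def)

lemma gg_le: "0 \<le> x \<Longrightarrow> gg x \<le> 1 / pi\<^sup>2"
  using gg_mono[of 0 x] by (simp add: gg_def cc_def power_divide)

lemma gg_pos_eq: "0 < s \<Longrightarrow> gg s = s * phi s"
  by (simp add: gg_def cc_def phi_def power2_eq_square)


definition hh :: "real \<Rightarrow> real" where
  "hh s = 16 / (2 * pi + pi\<^sup>2 * s)\<^sup>2"

lemma sinh_lower: fixes x :: real assumes "0 \<le> x" shows "x / 2 + x\<^sup>2 / 4 \<le> sinh x"
proof -
  have "1 + x + x\<^sup>2 / 2 \<le> exp x" using assms by (rule exp_lower_Taylor_quadratic)
  moreover have "exp (-x) \<le> 1" using assms by simp
  ultimately have "x + x\<^sup>2 / 2 \<le> exp x - exp (-x)" by linarith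
  then show ?thesis unfolding sinh_field_def by (simp add: field_simps)
qed

lemma gg_le_hh: assumes "0 \<le> s" shows "gg s \<le> hh s"
proof (cases "s = 0")
  case True
  have "pi\<^sup>2 * 4 \<le> pi\<^sup>2 * 16" by simp
  then show ?thesis using True by (simp add: gg_def cc_def hh_def power_divide field_simps)
next
  case False
  with assms have s: "0 < s" by simp
  have l: "(pi * s) / 2 + (pi * s)\<^sup>2 / 4 \<le> sinh (pi * s)" using s by (intro sinh_lower) simp
  have pos: "0 < (pi * s) / 2 + (pi * s)\<^sup>2 / 4" using s by (simp add: add_pos_nonneg)
  have "cc s = s / sinh (pi * s)" using s by (simp add: cc_def)
  also have "\<dots> \<le> s / ((pi * s) / 2 + (pi * s)\<^sup>2 / 4)"
    using s l pos by (intro divide_left_mono) auto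
  also have "(pi * s) / 2 + (pi * s)\<^sup>2 / 4 = s * (2 * pi + pi\<^sup>2 * s) / 4"
    by (simp add: field_simps power2_eq_square)
  also have "s / (s * (2 * pi + pi\<^sup>2 * s) / 4) = 4 / (2 * pi + pi\<^sup>2 * s)"
    using s by simp
  finally have "cc s \<le> 4 / (2 * pi + pi\<^sup>2 * s)" .
  then have "(cc s)\<^sup>2 \<le> (4 / (2 * pi + pi\<^sup>2 * s))\<^sup>2"
    using cc_pos[of s] s by (intro power_mono) auto
  then show ?thesis by (simp add: gg_def hh_def power_divide)
qed

lemma hh_integral:
  assumes "0 \<le> b"
  shows "(hh has_integral (16 / (2 * pi^3) - 16 / (pi\<^sup>2 * (2 * pi + pi\<^sup>2 * b)))) {0..b}"
proof -
  define H where "H u = (- 16 / pi\<^sup>2) * inverse (2 * pi + pi\<^sup>2 * u)" for u :: real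
  have "(hh has_integral (H b - H 0)) {0..b}"
  proof (rule fundamental_theorem_of_calculus[OF assms])
    fix x assume x: "x \<in> {0..b}"
    have pos: "2 * pi + pi\<^sup>2 * x > 0" using x by (simp add: add_pos_nonneg)
    have d1: "((\<lambda>u. 2 * pi + pi\<^sup>2 * u) has_real_derivative pi\<^sup>2) (at x)"
      by (auto intro!: derivative_eq_intros)
    note d2 = DERIV_cmult[OF DERIV_inverse_fun[OF d1], of "- 16 / pi\<^sup>2"]
    have eq: "- 16 / pi\<^sup>2 * - (pi\<^sup>2 * inverse ((2 * pi + pi\<^sup>2 * x)\<^sup>2)) = hh x"
      by (simp add: hh_def field_simps)
    have "(H has_real_derivative hh x) (at x)"
      unfolding H_def using d2 pos eq by (simp add: power2_eq_square inverse_mult_distrib)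
    then show "(H has_vector_derivative hh x) (at x within {0..b})"
      by (simp add: has_real_derivative_iff_has_vector_derivative has_vector_derivative_at_within)
  qed
  moreover have "H b - H 0 = 16 / (2 * pi^3) - 16 / (pi\<^sup>2 * (2 * pi + pi\<^sup>2 * b))"
    by (simp add: H_def field_simps power2_eq_square power3_eq_cube)
  ultimately show ?thesis by simp
qed

lemma gg_integrable_interval: "gg integrable_on {a..b}"
  by (intro integrable_continuous_real cont_gg)

lemma gg_int_bound: assumes "0 \<le> b" shows "integral {0..b} gg \<le> 16 / (2 * pi^3)"
proof -
  have "integral {0..b} gg \<le> integral {0..b} hh"
    using gg_le_hh
    by (intro integral_le[OF gg_integrable_interval has_integral_integrable[OF hh_integral[OF assms]]]) auto
  also have "\<dots> = 16 / (2 * pi^3) - 16 / (pi\<^sup>2 * (2 * pi + pi\<^sup>2 * b))"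
    using hh_integral[OF assms] by (rule integral_unique)
  also have "\<dots> \<le> 16 / (2 * pi^3)"
    using assms by (simp add: add_pos_nonneg)
  finally show ?thesis .
qed

lemma gg_integrable: "gg integrable_on {0..}"
proof -
  define f where "f k x = (if x \<in> {0..real k} then gg x else 0)" for k :: nat and x
  have int: "f k integrable_on {0..}" for k
    unfolding f_def by (subst integrable_restrict_Int) (simp add: gg_integrable_interval Int_absorb2 subset_iff)
  have I: "integral {0..} (f k) = integral {0..real k} gg" for k
    unfolding f_def by (subst integral_restrict_Int) (simp add: Int_absorb2 subset_iff)
  have "gg integrable_on {0..} \<and> ((\<lambda>k. integral {0..} (f k)) \<longlonglongrightarrow> integral {0..} gg)"
  proof (rule monotone_convergence_increasing[OF int])
    fix k x assume "x \<in> {0::real..}"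
    show "f k x \<le> f (Suc k) x" by (auto simp: f_def gg_nonneg)
  next
    fix x :: real assume "x \<in> {0..}"
    obtain N where N: "x \<le> real N" using real_arch_simple by blast
    have "\<forall>\<^sub>F k in sequentially. f k x = gg x"
      using N \<open>x \<in> {0..}\<close> by (auto simp: f_def eventually_sequentially intro!: exI[of _ N])
    then show "(\<lambda>k. f k x) \<longlonglongrightarrow> gg x" by (rule tendsto_eventually)
  next
    show "bounded (range (\<lambda>k. integral {0..} (f k)))"
      unfolding bounded_iff
    proof (intro exI ballI)
      fix y assume "y \<in> range (\<lambda>k. integral {0..} (f k))"
      then obtain k where y: "y = integral {0..real k} gg" by (auto simp: I)
      have "0 \<le> integral {0..real k} gg"
        by (intro integral_nonneg gg_integrable_interval) (simp add: gg_nonneg)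
      then show "norm y \<le> 16 / (2 * pi^3)" using gg_int_bound[of "real k"] y by simp
    qed
  qed
  then show ?thesis by blast
qed

lemma gg_lim:
  assumes b: "filterlim b at_top sequentially"
  shows "((\<lambda>n. integral {0..b n} gg) \<longlonglongrightarrow> integral {0..} gg)"
proof -
  define f where "f n x = (if x \<in> {0..b n} then gg x else 0)" for n :: nat and x
  have int: "f k integrable_on {0..}" for k
    unfolding f_def by (subst integrable_restrict_Int) (simp add: gg_integrable_interval Int_absorb2 subset_iff)
  have I: "integral {0..} (f k) = integral {0..b k} gg" for k
    unfolding f_def by (subst integral_restrict_Int) (simp add: Int_absorb2 subset_iff)
  have "((\<lambda>k. integral {0..} (f k)) \<longlonglongrightarrow> integral {0..} gg)"
  proof (rule dominated_convergence(2)[OF int gg_integrable])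
    fix k x assume "x \<in> {0::real..}"
    show "norm (f k x) \<le> gg x" by (auto simp: f_def gg_nonneg)
  next
    fix x :: real assume "x \<in> {0..}"
    have "\<forall>\<^sub>F k in sequentially. x \<le> b k" using b by (simp add: filterlim_at_top)
    then have "\<forall>\<^sub>F k in sequentially. f k x = gg x"
      by eventually_elim (use \<open>x \<in> {0..}\<close> in \<open>auto simp: f_def\<close>)
    then show "(\<lambda>k. f k x) \<longlonglongrightarrow> gg x" by (rule tendsto_eventually)
  qed
  then show ?thesis by (simp add: I)
qed


lemma strip_bounds:
  assumes "0 \<le> a" "a \<le> b"
  shows "(b - a) * gg b \<le> integral {a..b} gg" "integral {a..b} gg \<le> (b - a) * gg a"
proof -
  have c: "integral {a..b} (\<lambda>_. c) = (b - a) * c" for c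
    using assms by (simp add: content_real)
  have ic: "(\<lambda>_. c) integrable_on {a..b}" for c :: real
    by (intro integrable_continuous_real continuous_on_const)
  have "integral {a..b} (\<lambda>_. gg b) \<le> integral {a..b} gg"
    using assms by (intro integral_le[OF ic gg_integrable_interval] gg_mono) auto
  then show "(b - a) * gg b \<le> integral {a..b} gg" by (metis c)
  have "integral {a..b} gg \<le> integral {a..b} (\<lambda>_. gg a)"
    using assms by (intro integral_le[OF gg_integrable_interval ic] gg_mono) auto
  then show "integral {a..b} gg \<le> (b - a) * gg a" by (metis c)
qed

lemma telescope:
  assumes "0 < t"
  shows "(\<Sum>j<n. integral {real j * t .. real (Suc j) * t} gg) = integral {0 .. real n * t} gg"
proof (induction n)
  case 0 then show ?case by simp
next
  case (Suc n)
  have "integral {0..real n * t} gg + integral {real n * t..real (Suc n) * t} gg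
        = integral {0..real (Suc n) * t} gg"
    using assms by (intro Henstock_Kurzweil_Integration.integral_combine gg_integrable_interval) (auto simp: algebra_simps)
  with Suc show ?case by simp
qed

lemma squeeze:
  assumes t: "0 < t"
  shows "integral {0..} gg - t / pi\<^sup>2 \<le> t\<^sup>2 * phi_eff t \<and> t\<^sup>2 * phi_eff t \<le> integral {0..} gg"
proof -
  define G where "G = integral {0..} gg"
  define a where "a j = t * gg (real (Suc j) * t)" for j
  define I where "I j = integral {real j * t .. real (Suc j) * t} gg" for j
  have a_nonneg: "0 \<le> a j" for j using t by (simp add: a_def gg_nonneg)
  have aI: "a j \<le> I j" for j
    using strip_bounds(1)[of "real j * t" "real (Suc j) * t"] t
    by (simp add: a_def I_def algebra_simps)
  have Ia: "I (Suc j) \<le> a j" for j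
    using strip_bounds(2)[of "real (Suc j) * t" "real (Suc (Suc j)) * t"] t
    by (simp add: a_def I_def algebra_simps)
  have I0: "I 0 \<le> t / pi\<^sup>2"
    using strip_bounds(2)[of 0 t] t by (simp add: I_def gg_def cc_def power_divide)
  have sumI: "(\<Sum>j<n. I j) = integral {0 .. real n * t} gg" for n
    unfolding I_def by (rule telescope[OF t])
  have le_G: "integral {0 .. b} gg \<le> G" if "0 \<le> b" for b
    unfolding G_def using that
    by (intro integral_subset_le gg_integrable_interval gg_integrable) (auto simp: gg_nonneg)
  have upper: "(\<Sum>j<n. a j) \<le> G" for n
  proof -
    have "(\<Sum>j<n. a j) \<le> (\<Sum>j<n. I j)" by (intro sum_mono aI)
    also have "\<dots> \<le> G" using t by (simp add: sumI le_G)
    finally show ?thesis .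
  qed
  have lower: "integral {0 .. real (Suc n) * t} gg - t / pi\<^sup>2 \<le> (\<Sum>j<n. a j)" for n
  proof -
    have "integral {0 .. real (Suc n) * t} gg = I 0 + (\<Sum>j<n. I (Suc j))"
      by (simp only: sumI[symmetric] sum.lessThan_Suc_shift)
    also have "(\<Sum>j<n. I (Suc j)) \<le> (\<Sum>j<n. a j)" by (intro sum_mono Ia)
    finally show ?thesis using I0 by linarith
  qed
  have summ: "summable a"
  proof (rule bounded_imp_summable[of _ G])
    fix n show "sum a {..n} \<le> G" using upper[of "Suc n"] by (simp add: lessThan_Suc_atMost)
  qed (rule a_nonneg)
  have s_le: "suminf a \<le> G" by (rule suminf_le_const[OF summ upper])
  have rs: "filterlim (\<lambda>n. real (Suc n)) at_top sequentially" by real_asymp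
  have bl: "filterlim (\<lambda>n. real (Suc n) * t) at_top sequentially"
    using t rs by (intro filterlim_at_top_mult_tendsto_pos[OF tendsto_const])
  have s_ge: "G - t / pi\<^sup>2 \<le> suminf a"
  proof (rule LIMSEQ_le[OF _ summable_LIMSEQ[OF summ]])
    show "(\<lambda>n. integral {0 .. real (Suc n) * t} gg - t / pi\<^sup>2) \<longlonglongrightarrow> G - t / pi\<^sup>2"
      unfolding G_def by (intro tendsto_diff gg_lim[OF bl] tendsto_const)
    show "\<exists>N. \<forall>n\<ge>N. integral {0 .. real (Suc n) * t} gg - t / pi\<^sup>2 \<le> sum a {..<n}"
      using lower by blast
  qed
  have aeq: "a j = t\<^sup>2 * (real (Suc j) * phi (real (Suc j) * t))" for j
  proof -
    have "0 < real (Suc j) * t" using t by simp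
    from gg_pos_eq[OF this] show ?thesis by (simp add: a_def power2_eq_square)
  qed
  have summ2: "summable (\<lambda>j. real (Suc j) * phi (real (Suc j) * t))"
  proof -
    have "summable (\<lambda>j. a j / t\<^sup>2)" by (intro summable_divide summ)
    then show ?thesis using t by (simp add: aeq)
  qed
  have "t\<^sup>2 * phi_eff t = suminf a"
    unfolding phi_eff_def aeq by (rule suminf_mult[OF summ2, symmetric])
  then show ?thesis using s_le s_ge by (simp add: G_def)
qed


definition V1 :: "real \<Rightarrow> real" where
 "V1 s = (1 / pi) * s * (cosh (pi * s) / sinh (pi * s)) - (1 / pi\<^sup>2) * ln (2 * sinh (pi * s))"

lemma V_pos_eq: "0 < s \<Longrightarrow> V s = V1 s"
  by (simp add: V_def V1_def)

lemma V_minus: "V (- x) = V x"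
  by (simp add: V_def)

lemma V1_deriv:
  assumes x: "0 < x"
  shows "(V1 has_real_derivative - phi x) (at x)"
proof -
  have sh: "sinh (pi * x) > 0" using x by (simp add: sinh_real_pos_iff)
  have c2: "(cosh (pi * x))\<^sup>2 = (sinh (pi * x))\<^sup>2 + 1" by (rule cosh_square_eq)
  show ?thesis
    unfolding V1_def phi_def using sh c2 x
    by (auto intro!: derivative_eq_intros simp: field_simps power2_eq_square simp del: sinh_real_pos_iff sinh_real_zero_iff)
qed

lemma phi_nonneg: "0 \<le> x \<Longrightarrow> 0 \<le> phi x"
  by (simp add: phi_def)

lemma W1: "((\<lambda>x::real. x * (cosh x / sinh x) - ln (2 * sinh x)) \<longlongrightarrow> 0) at_top" by real_asymp
lemma W2: "((\<lambda>x::real. x * (x * (cosh x / sinh x) - ln (2 * sinh x))) \<longlongrightarrow> 0) at_top" by real_asymp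
lemma pi_top: "filterlim (\<lambda>s::real. pi * s) at_top at_top"
  by (rule filterlim_tendsto_pos_mult_at_top[OF tendsto_const pi_gt_zero filterlim_ident])
lemma V1_W: "V1 s = (1 / pi\<^sup>2) * ((pi * s) * (cosh (pi * s) / sinh (pi * s)) - ln (2 * sinh (pi * s)))"
  by (simp add: V1_def field_simps power2_eq_square)
lemma V1_lim_top: "(V1 \<longlongrightarrow> 0) at_top"
proof -
  have "((\<lambda>s. (1 / pi\<^sup>2) * ((pi * s) * (cosh (pi * s) / sinh (pi * s)) - ln (2 * sinh (pi * s)))) \<longlongrightarrow> (1 / pi\<^sup>2) * 0) at_top"
    by (intro tendsto_mult tendsto_const filterlim_compose[OF W1 pi_top])
  then show ?thesis by (simp add: V1_W[abs_def])
qed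
lemma sV1_lim_top: "((\<lambda>s. s * V1 s) \<longlongrightarrow> 0) at_top"
proof -
  have "((\<lambda>s. (1 / pi^3) * ((pi * s) * ((pi * s) * (cosh (pi * s) / sinh (pi * s)) - ln (2 * sinh (pi * s))))) \<longlongrightarrow> (1 / pi^3) * 0) at_top"
    by (intro tendsto_mult tendsto_const filterlim_compose[OF W2 pi_top])
  moreover have "(1 / pi^3) * ((pi * s) * ((pi * s) * (cosh (pi * s) / sinh (pi * s)) - ln (2 * sinh (pi * s)))) = s * V1 s" for s
    by (simp add: V1_W field_simps power2_eq_square power3_eq_cube)
  ultimately show ?thesis by simp
qed
lemma sV1_lim_0: "((\<lambda>s. s * V1 s) \<longlongrightarrow> 0) (at_right 0)"
proof -
  have A1: "((\<lambda>s::real. s * ((1 / pi) * s * (cosh (pi * s) / sinh (pi * s)))) \<longlongrightarrow> 0) (at_right 0)"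
    by real_asymp
  have A3: "((\<lambda>s::real. s * ln (2 * sinh (pi * s))) \<longlongrightarrow> 0) (at_right 0)" by real_asymp
  have "((\<lambda>s. s * ((1 / pi) * s * (cosh (pi * s) / sinh (pi * s))) - (1 / pi\<^sup>2) * (s * ln (2 * sinh (pi * s))))
        \<longlongrightarrow> 0 - (1 / pi\<^sup>2) * 0) (at_right 0)"
    by (intro tendsto_diff tendsto_mult A1 A3 tendsto_const)
  then show ?thesis by (simp add: V1_def algebra_simps)
qed

lemma V1_nonneg: assumes x: "0 < x" shows "0 \<le> V1 x"
proof (rule tendsto_le[OF trivial_limit_at_top_linorder tendsto_const V1_lim_top])
  show "\<forall>\<^sub>F b in at_top. V1 b \<le> V1 x"
    unfolding eventually_at_top_linorder
  proof (intro exI allI impI)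
    fix b assume "x \<le> b"
    show "V1 b \<le> V1 x"
    proof (rule DERIV_nonpos_imp_nonincreasing[OF \<open>x \<le> b\<close>])
      fix y assume "x \<le> y" "y \<le> b"
      then have "0 < y" using x by simp
      then show "\<exists>d. (V1 has_real_derivative d) (at y) \<and> d \<le> 0"
        using V1_deriv[of y] phi_nonneg[of y] by (intro exI[of _ "- phi y"]) auto
    qed
  qed
qed

lemma V_nonneg: "0 \<le> V x"
proof (cases "x = 0")
  case False
  then have "0 < \<bar>x\<bar>" by simp
  from V1_nonneg[OF this] have "0 \<le> V1 \<bar>x\<bar>" .
  then show ?thesis using False by (simp add: V_def V1_def)
qed (simp add: V_def)

lemma V_integral_interval:
  assumes a: "0 < a" and ab: "a \<le> b"
  shows "(V has_integral (b * V1 b - a * V1 a + integral {a..b} gg)) {a..b}"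
proof -
  have "((\<lambda>s. V1 s - gg s) has_integral (b * V1 b - a * V1 a)) {a..b}"
  proof (rule fundamental_theorem_of_calculus[OF ab])
    fix x assume "x \<in> {a..b}"
    then have x: "0 < x" using a by simp
    have "((\<lambda>s. s * V1 s) has_real_derivative (1 * V1 x + x * (- phi x))) (at x)"
      using DERIV_mult[OF DERIV_ident V1_deriv[OF x]] by (simp add: mult.commute)
    moreover have "1 * V1 x + x * (- phi x) = V1 x - gg x" using gg_pos_eq[OF x] by simp
    ultimately show "((\<lambda>s. s * V1 s) has_vector_derivative V1 x - gg x) (at x within {a..b})"
      by (simp add: has_real_derivative_iff_has_vector_derivative has_vector_derivative_at_within)
  qed
  from has_integral_add[OF this integrable_integral[OF gg_integrable_interval]]
  have "(V1 has_integral (b * V1 b - a * V1 a + integral {a..b} gg)) {a..b}" by simp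
  then show ?thesis
    by (rule has_integral_cong[THEN iffD1, rotated]) (use a in \<open>simp add: V_pos_eq\<close>)
qed

lemma V_integral_sym:
  assumes a: "0 < a" and ab: "a \<le> b"
  shows "(V has_integral 2 * (b * V1 b - a * V1 a + integral {a..b} gg)) {x. a \<le> \<bar>x\<bar> \<and> \<bar>x\<bar> \<le> b}"
proof -
  define I where "I = b * V1 b - a * V1 a + integral {a..b} gg"
  have i1: "(V has_integral I) {a..b}" unfolding I_def by (rule V_integral_interval[OF a ab])
  have "((\<lambda>x. V (- x)) has_integral I) {-b..-a}" using i1 by simp
  then have i2: "(V has_integral I) {-b..-a}" by (simp add: V_minus)
  have "(V has_integral I + I) ({-b..-a} \<union> {a..b})"
  proof (rule has_integral_Un[OF i2 i1])
    have "{-b..-a} \<inter> {a..b} = {}" using a by auto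
    then show "negligible ({-b..-a} \<inter> {a..b})" by simp
  qed
  moreover have "{-b..-a} \<union> {a..b} = {x. a \<le> \<bar>x\<bar> \<and> \<bar>x\<bar> \<le> b}" using a by auto
  ultimately show ?thesis by (simp add: I_def algebra_simps)
qed


lemma gg_small: assumes "0 \<le> a" shows "0 \<le> integral {0..a} gg \<and> integral {0..a} gg \<le> a / pi\<^sup>2"
proof
  show "0 \<le> integral {0..a} gg"
    by (intro integral_nonneg gg_integrable_interval) (simp add: gg_nonneg)
  show "integral {0..a} gg \<le> a / pi\<^sup>2"
    using strip_bounds(2)[of 0 a] assms by (simp add: gg_def cc_def power_divide)
qed

lemma V_main: "V integrable_on UNIV \<and> integral UNIV V = 2 * integral {0..} gg"
proof -
  define a where "a k = 1 / real (Suc k)" for k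
  define b where "b k = real (Suc k)" for k
  define A where "A k = {x. a k \<le> \<bar>x\<bar> \<and> \<bar>x\<bar> \<le> b k}" for k
  define I where "I k = b k * V1 (b k) - a k * V1 (a k) + integral {a k..b k} gg" for k
  define f where "f k x = (if x \<in> A k then V x else 0)" for k x
  have a_pos: "0 < a k" for k by (simp add: a_def)
  have ab: "a k \<le> b k" for k by (simp add: a_def b_def field_simps)
  have hasI: "(V has_integral 2 * I k) (A k)" for k
    unfolding A_def I_def by (rule V_integral_sym[OF a_pos ab])
  have int: "f k integrable_on UNIV" for k
    unfolding f_def integrable_restrict_UNIV using hasI by blast
  have intf: "integral UNIV (f k) = 2 * I k" for k
    unfolding f_def integral_restrict_UNIV using hasI by (rule integral_unique)
  have blim: "filterlim b at_top sequentially" unfolding b_def by real_asymp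
  have alim: "(a \<longlonglongrightarrow> 0)" unfolding a_def by real_asymp
  have alim': "filterlim a (at_right 0) sequentially"
    by (rule tendsto_imp_filterlim_at_right[OF alim]) (simp add: a_pos)
  have t1: "(\<lambda>k. b k * V1 (b k)) \<longlonglongrightarrow> 0"
    using filterlim_compose[OF sV1_lim_top blim] by simp
  have t2: "(\<lambda>k. a k * V1 (a k)) \<longlonglongrightarrow> 0"
    using filterlim_compose[OF sV1_lim_0 alim'] by simp
  have split: "integral {a k..b k} gg = integral {0..b k} gg - integral {0..a k} gg" for k
    using Henstock_Kurzweil_Integration.integral_combine[of 0 "a k" "b k" gg] a_pos[of k] ab[of k]
    by (simp add: gg_integrable_interval less_imp_le)
  have t3: "(\<lambda>k. integral {0..a k} gg) \<longlonglongrightarrow> 0"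
  proof (rule tendsto_sandwich[OF _ _ tendsto_const])
    show "\<forall>\<^sub>F k in sequentially. 0 \<le> integral {0..a k} gg"
      by (intro always_eventually allI) (simp add: gg_small less_imp_le[OF a_pos])
    show "\<forall>\<^sub>F k in sequentially. integral {0..a k} gg \<le> a k / pi\<^sup>2"
      by (intro always_eventually allI) (simp add: gg_small less_imp_le[OF a_pos])
    show "(\<lambda>k. a k / pi\<^sup>2) \<longlonglongrightarrow> 0"
      using tendsto_divide[OF alim tendsto_const, of "pi\<^sup>2"] by simp
  qed
  have t4: "(\<lambda>k. integral {a k..b k} gg) \<longlonglongrightarrow> integral {0..} gg - 0"
    unfolding split by (intro tendsto_diff gg_lim[OF blim] t3)
  have Ilim: "(\<lambda>k. 2 * I k) \<longlonglongrightarrow> 2 * (0 - 0 + (integral {0..} gg - 0))"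
    unfolding I_def by (intro tendsto_mult tendsto_const tendsto_add tendsto_diff t1 t2 t4)
  have mc: "V integrable_on UNIV \<and> ((\<lambda>k. integral UNIV (f k)) \<longlonglongrightarrow> integral UNIV V)"
  proof (rule monotone_convergence_increasing[OF int])
    fix k x
    have "A k \<subseteq> A (Suc k)" by (auto simp: A_def a_def b_def field_simps)
    then show "f k x \<le> f (Suc k) x" by (auto simp: f_def V_nonneg)
  next
    fix x :: real
    show "(\<lambda>k. f k x) \<longlonglongrightarrow> V x"
    proof (cases "x = 0")
      case True
      have "V 0 = 0" unfolding V_def by simp
      then show ?thesis using True by (simp add: f_def cong: if_cong)
    next
      case False
      then have "0 < \<bar>x\<bar>" by simp
      have e1: "\<forall>\<^sub>F k in sequentially. a k < \<bar>x\<bar>" using order_tendstoD(2)[OF alim \<open>0 < \<bar>x\<bar>\<close>] .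
      have e2: "\<forall>\<^sub>F k in sequentially. \<bar>x\<bar> \<le> b k" using blim by (simp add: filterlim_at_top)
      have "\<forall>\<^sub>F k in sequentially. f k x = V x"
        using e1 e2 by eventually_elim (auto simp: f_def A_def)
      then show ?thesis by (rule tendsto_eventually)
    qed
  next
    show "bounded (range (\<lambda>k. integral UNIV (f k)))"
      unfolding intf by (rule convergent_imp_bounded[OF Ilim])
  qed
  then have "(\<lambda>k. 2 * I k) \<longlonglongrightarrow> integral UNIV V" by (simp add: intf)
  with Ilim have "integral UNIV V = 2 * integral {0..} gg" by (simp add: LIMSEQ_unique)
  with mc show ?thesis by blast
qed

theorem mainTheorem1:
  shows "V integrable_on UNIV \<and>
         ((\<lambda>t. t\<^sup>2 * phi_eff t) \<longlongrightarrow> (1/2) * integral UNIV V) (at_right 0)"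
proof -
  have eq: "(1/2) * integral UNIV V = integral {0..} gg" using V_main by simp
  have "((\<lambda>t. t\<^sup>2 * phi_eff t) \<longlongrightarrow> integral {0..} gg) (at_right 0)"
  proof (rule tendsto_sandwich[OF _ _ _ tendsto_const])
    show "\<forall>\<^sub>F t in at_right 0. integral {0..} gg - t / pi\<^sup>2 \<le> t\<^sup>2 * phi_eff t"
      using squeeze by (auto simp: eventually_at_right_less eventually_at_filter
         intro: eventually_mono[OF eventually_at_right_less])
    show "\<forall>\<^sub>F t in at_right 0. t\<^sup>2 * phi_eff t \<le> integral {0..} gg"
      using squeeze by (auto intro: eventually_mono[OF eventually_at_right_less])
    have "((\<lambda>t. integral {0..} gg - t / pi\<^sup>2) \<longlongrightarrow> integral {0..} gg - 0 / pi\<^sup>2) (at_right 0)"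
      by (intro tendsto_intros) simp
    then show "((\<lambda>t. integral {0..} gg - t / pi\<^sup>2) \<longlongrightarrow> integral {0..} gg) (at_right 0)" by simp
  qed
  then show ?thesis using V_main eq by simp
qed

end
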